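(* Let $m_1,\dots,m_r,n$ be positive integers and $m=\sum_{i=1}^r m_i$. If $K_{m_1,\dots,m_r}\times K_n$ is equitably $k$-colorable for some positive integer $k<\lceil mn/(m+1)\rceil$, then $K_{m_1 n,\dots,m_r n}$ is also equitably $k$-colorable.
   Context: All graphs are finite, simple and undirected. A (proper) $k$-coloring of $G$ is a map $f:V(G)\to\{1,\dots,k\}$ with $f(x)\ne f(y)$ whenever $xy\in E(G)$; an equitable $k$-coloring is a $k$-coloring in which any two color classes $f^{-1}(i)$ differ in size by at most $1$; $G$ is equitably $k$-colorable if it has one. $K_{a_1,\dots,a_r}$ denotes the complete multipartite graph with parts of sizes $a_1,\dots,a_r$; $K_n$ is the complete graph on $n$ vertices. The Kronecker product $G\times H$ has vertex set $V(G)\times V(H)$, with $(x,y)$ adjacent to $(x',y')$ iff $xx'\in E(G)$ and $yy'\in E(H)$. *)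

theory Defs
  imports Complex_Main
begin

text \<open>A finite simple graph is given by a finite vertex set V and a symmetric,
irreflexive adjacency relation E (only its restriction to V matters).\<close>

definition proper_coloring ::
  "'a set \<Rightarrow> ('a \<Rightarrow> 'a \<Rightarrow> bool) \<Rightarrow> nat \<Rightarrow> ('a \<Rightarrow> nat) \<Rightarrow> bool" where
  "proper_coloring V E k f \<longleftrightarrow>
     (\<forall>x\<in>V. f x \<in> {1..k}) \<and> (\<forall>x\<in>V. \<forall>y\<in>V. E x y \<longrightarrow> f x \<noteq> f y)"

definition equitable_coloring ::
  "'a set \<Rightarrow> ('a \<Rightarrow> 'a \<Rightarrow> bool) \<Rightarrow> nat \<Rightarrow> ('a \<Rightarrow> nat) \<Rightarrow> bool" where
  "equitable_coloring V E k f \<longleftrightarrow> proper_coloring V E k f \<and>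
     (\<forall>i\<in>{1..k}. \<forall>j\<in>{1..k}.
        card {x\<in>V. f x = i} \<le> card {x\<in>V. f x = j} + 1)"

definition equitably_colorable ::
  "'a set \<Rightarrow> ('a \<Rightarrow> 'a \<Rightarrow> bool) \<Rightarrow> nat \<Rightarrow> bool" where
  "equitably_colorable V E k \<longleftrightarrow> (\<exists>f. equitable_coloring V E k f)"

text \<open>Complete multipartite graph K_{a_0,...,a_{r-1}}: part i is {i} \<times> {..<a i}.\<close>

definition cmp_verts :: "nat \<Rightarrow> (nat \<Rightarrow> nat) \<Rightarrow> (nat \<times> nat) set" where
  "cmp_verts r a = {(i, j). i < r \<and> j < a i}"

definition cmp_adj :: "nat \<times> nat \<Rightarrow> nat \<times> nat \<Rightarrow> bool" where
  "cmp_adj x y \<longleftrightarrow> fst x \<noteq> fst y"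

definition complete_verts :: "nat \<Rightarrow> nat set" where
  "complete_verts n = {..<n}"

definition complete_adj :: "nat \<Rightarrow> nat \<Rightarrow> bool" where
  "complete_adj x y \<longleftrightarrow> x \<noteq> y"

definition kron_verts :: "'a set \<Rightarrow> 'b set \<Rightarrow> ('a \<times> 'b) set" where
  "kron_verts V W = V \<times> W"

definition kron_adj ::
  "('a \<Rightarrow> 'a \<Rightarrow> bool) \<Rightarrow> ('b \<Rightarrow> 'b \<Rightarrow> bool) \<Rightarrow> 'a \<times> 'b \<Rightarrow> 'a \<times> 'b \<Rightarrow> bool" where
  "kron_adj E F x y \<longleftrightarrow> E (fst x) (fst y) \<and> F (snd x) (snd y)"

end

theory Submission
  imports Defs
begin

lemma card_cmp: "card (cmp_verts r a) = (\<Sum>i<r. a i)"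
proof -
  have "cmp_verts r a = Sigma {..<r} (\<lambda>i. {..<a i})" by (auto simp: cmp_verts_def)
  thus ?thesis by (simp add: card_SigmaI)
qed

lemma fin_cmp: "finite (cmp_verts r a)"
proof -
  have "cmp_verts r a = Sigma {..<r} (\<lambda>i. {..<a i})" by (auto simp: cmp_verts_def)
  thus ?thesis by simp
qed

theorem lemma3p1:
  fixes r n k :: nat and ms :: "nat \<Rightarrow> nat"
  assumes "r \<ge> 1" and "n \<ge> 1"
    and "\<forall>i<r. ms i \<ge> 1"
    and "k \<ge> 1"
    and "int k < ceiling (real ((\<Sum>i<r. ms i) * n) / real ((\<Sum>i<r. ms i) + 1))"
    and "equitably_colorable
           (kron_verts (cmp_verts r ms) (complete_verts n))
           (kron_adj cmp_adj complete_adj) k"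
  shows "equitably_colorable (cmp_verts r (\<lambda>i. ms i * n)) cmp_adj k"
proof -
  define m where "m = (\<Sum>i<r. ms i)"
  define V where "V = kron_verts (cmp_verts r ms) (complete_verts n)"
  obtain f where f: "equitable_coloring V (kron_adj cmp_adj complete_adj) k f"
    using assms(6) unfolding equitably_colorable_def V_def by blast
  have col: "\<And>x. x \<in> V \<Longrightarrow> f x \<in> {1..k}"
    and prp: "\<And>x y. x \<in> V \<Longrightarrow> y \<in> V \<Longrightarrow> kron_adj cmp_adj complete_adj x y \<Longrightarrow> f x \<noteq> f y"
    and eq: "\<And>i j. i \<in> {1..k} \<Longrightarrow> j \<in> {1..k} \<Longrightarrow>
        card {x\<in>V. f x = i} \<le> card {x\<in>V. f x = j} + 1"
    using f unfolding equitable_coloring_def proper_coloring_def by blast+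
  have finV: "finite V" by (simp add: V_def kron_verts_def complete_verts_def fin_cmp)
  have cardV: "card V = m * n"
    by (simp add: V_def kron_verts_def complete_verts_def card_cartesian_product card_cmp m_def)
  have "real k < real (m*n) / real (m+1)"
    using assms(5) unfolding m_def[symmetric] by (simp add: less_ceiling_iff)
  hence "real k * real (m+1) < real (m*n)" by (simp add: field_simps)
  hence kbound: "k * (m+1) < m * n" by (metis of_nat_less_iff of_nat_mult)
  have big: "m + 1 \<le> card {x\<in>V. f x = c}" if c: "c \<in> {1..k}" for c
  proof (rule ccontr)
    assume "\<not> ?thesis"
    hence small: "card {x\<in>V. f x = c} \<le> m" by simp
    have "V = (\<Union>i\<in>{1..k}. {x\<in>V. f x = i})" using col by blast
    hence "card V \<le> (\<Sum>i\<in>{1..k}. card {x\<in>V. f x = i})"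
      by (metis card_UN_le finite_atLeastAtMost)
    also have "\<dots> \<le> (\<Sum>i\<in>{1..k}. m + 1)"
      by (rule sum_mono) (use eq[OF _ c] small in fastforce)
    also have "\<dots> = k * (m+1)" by simp
    finally show False using cardV kbound by simp
  qed
  have key: False if xy: "x \<in> V" "y \<in> V" "fst (fst x) \<noteq> fst (fst y)" "f x = f y" for x y
  proof -
    have sn: "snd x = snd y"
      using prp[OF xy(1,2)] xy(3,4) by (auto simp: kron_adj_def cmp_adj_def complete_adj_def)
    have sub: "{z\<in>V. f z = f x} \<subseteq> (\<lambda>p. (p, snd x)) ` cmp_verts r ms"
    proof
      fix z assume z: "z \<in> {z\<in>V. f z = f x}"
      have "snd z = snd x"
      proof (rule ccontr)
        assume ne: "snd z \<noteq> snd x"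
        show False
        proof (cases "fst (fst z) = fst (fst x)")
          case True
          thus False using prp[of z y] z xy sn ne
            by (auto simp: kron_adj_def cmp_adj_def complete_adj_def)
        next
          case False
          thus False using prp[of z x] z xy ne
            by (auto simp: kron_adj_def cmp_adj_def complete_adj_def)
        qed
      qed
      moreover have "fst z \<in> cmp_verts r ms" using z by (auto simp: V_def kron_verts_def)
      ultimately show "z \<in> (\<lambda>p. (p, snd x)) ` cmp_verts r ms"
        by (metis image_eqI prod.collapse)
    qed
    have "card {z\<in>V. f z = f x} \<le> card ((\<lambda>p. (p, snd x)) ` cmp_verts r ms)"
      by (rule card_mono[OF finite_imageI[OF fin_cmp] sub])
    also have "\<dots> \<le> m" using card_image_le[OF fin_cmp] card_cmp m_def by metis
    finally show False using big[OF col[OF xy(1)]] by simp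
  qed
  define W where "W = cmp_verts r (\<lambda>i. ms i * n)"
  define \<phi> where "\<phi> = (\<lambda>w::nat\<times>nat. ((fst w, snd w div n), snd w mod n))"
  define g where "g = f \<circ> \<phi>"
  have phiV: "\<phi> w \<in> V" if wW0: "w \<in> W" for w
  proof -
    obtain i t where w: "w = (i,t)" "i < r" "t < ms i * n" using wW0 unfolding W_def cmp_verts_def by (cases w) blast
    have "t div n < ms i" using w(3) by (simp add: less_mult_imp_div_less)
    moreover have "t mod n < n" using assms(2) by simp
    ultimately show ?thesis using w
      by (simp add: \<phi>_def V_def kron_verts_def cmp_verts_def complete_verts_def)
  qed
  have inj: "inj_on \<phi> W"
  proof (rule inj_onI)
    fix a b assume "\<phi> a = \<phi> b"
    hence "fst a = fst b" "snd a div n = snd b div n" "snd a mod n = snd b mod n"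
      by (auto simp: \<phi>_def)
    thus "a = b" by (metis div_mod_decomp prod.expand)
  qed
  have cls: "{x\<in>V. f x = c} = \<phi> ` {w\<in>W. g w = c}" for c
  proof
    show "\<phi> ` {w\<in>W. g w = c} \<subseteq> {x\<in>V. f x = c}" using phiV by (auto simp: g_def)
  next
    show "{x\<in>V. f x = c} \<subseteq> \<phi> ` {w\<in>W. g w = c}"
    proof
      fix x assume x: "x \<in> {x\<in>V. f x = c}"
      then obtain i j d where xe: "x = ((i,j),d)" "i < r" "j < ms i" "d < n"
        by (auto simp: V_def kron_verts_def cmp_verts_def complete_verts_def)
      define w where "w = (i, j*n + d)"
      have "j*n + d < ms i * n"
      proof -
        have "j*n + d < (j+1)*n" using xe(4) by simp
        also have "\<dots> \<le> ms i * n" using xe(3) by (intro mult_le_mono1) simp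
        finally show ?thesis .
      qed
      hence wW: "w \<in> W" using xe by (simp add: w_def W_def cmp_verts_def)
      have "\<phi> w = x" using xe by (simp add: \<phi>_def w_def)
      thus "x \<in> \<phi> ` {w\<in>W. g w = c}" using x wW by (auto simp: g_def)
    qed
  qed
  have cardcls: "card {w\<in>W. g w = c} = card {x\<in>V. f x = c}" for c
  proof -
    have s: "{w\<in>W. g w = c} \<subseteq> W" by blast
    show ?thesis unfolding cls[of c] using card_image[OF inj_on_subset[OF inj s]] by simp
  qed
  have "equitable_coloring W cmp_adj k g"
    unfolding equitable_coloring_def proper_coloring_def
  proof (intro conjI ballI impI)
    fix x assume "x \<in> W" thus "g x \<in> {1..k}" using col phiV by (simp add: g_def)
  next
    fix x y assume "x \<in> W" "y \<in> W" "cmp_adj x y"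
    thus "g x \<noteq> g y" using key[of "\<phi> x" "\<phi> y"] phiV
      by (auto simp: g_def \<phi>_def cmp_adj_def)
  next
    fix i j assume "i \<in> {1..k}" "j \<in> {1..k}"
    thus "card {x\<in>W. g x = i} \<le> card {x\<in>W. g x = j} + 1" using eq cardcls by simp
  qed
  thus ?thesis unfolding equitably_colorable_def W_def by blast
qed

end
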